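(* Let $m,n\in\mathbb{N}$ be such that ${\rm SR}(m,n)$ has at least one vertex. Then the smallest eigenvalue of ${\rm SR}(m,n)$ equals $\max\left(-n,\,-\binom{m}{2}\right)$.
   Context: $\mathbb{N}=\{0,1,2,\dots\}$. For $m,n\in\mathbb{N}$, ${\rm SR}(m,n)$ is the graph whose vertices are the vectors in $\mathbb{N}^m$ with coordinate sum $n$, two vertices being adjacent when they differ in precisely two coordinate positions. Eigenvalues are those of the adjacency matrix. *)

theory Defs
  imports "Jordan_Normal_Form.Char_Poly"
begin

definition SR_vertices :: "nat \<Rightarrow> nat \<Rightarrow> nat list set" where
  "SR_vertices m n = {xs. length xs = m \<and> sum_list xs = n}"

definition SR_adj :: "nat \<Rightarrow> nat list \<Rightarrow> nat list \<Rightarrow> bool" where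
  "SR_adj m xs ys = (card {i. i < m \<and> xs ! i \<noteq> ys ! i} = 2)"

text \<open>A fixed enumeration (without repetition) of the vertex set; the spectrum does not depend on it.\<close>
definition SR_enum :: "nat \<Rightarrow> nat \<Rightarrow> nat list list" where
  "SR_enum m n = (SOME vs. distinct vs \<and> set vs = SR_vertices m n)"

definition SR_adj_matrix :: "nat \<Rightarrow> nat \<Rightarrow> real mat" where
  "SR_adj_matrix m n =
     (let vs = SR_enum m n
      in mat (length vs) (length vs)
           (\<lambda>(i, j). if SR_adj m (vs ! i) (vs ! j) then 1 else 0))"

end

theory Submission
  imports Defs
begin

lemma card_as_sum: "finite I \<Longrightarrow> real (card {C\<in>I. P C}) = (\<Sum>C\<in>I. if P C then 1 else 0)"
proof -
  assume "finite I"
  have "{C\<in>I. P C} = I \<inter> Collect P" by auto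
  then show ?thesis using \<open>finite I\<close> by (simp add: sum.If_cases)
qed

lemma abstract_bound:
  fixes vs :: "'v list" and adj :: "'v \<Rightarrow> 'v \<Rightarrow> bool" and mem :: "'c \<Rightarrow> 'v \<Rightarrow> bool"
  assumes dist: "distinct vs" and fin: "finite I" and irr: "\<And>x. \<not> adj x x"
  and cnt: "\<And>x y. x \<in> set vs \<Longrightarrow> y \<in> set vs \<Longrightarrow>
      card {C\<in>I. mem C x \<and> mem C y} = (if x = y then c else if adj x y then 1 else 0)"
  and ev: "eigenvalue (mat (length vs) (length vs) (\<lambda>(i,j). if adj (vs!i) (vs!j) then 1 else 0)) (k::real)"
  shows "- real c \<le> k"
proof -
  define N where "N = length vs"
  define A where "A = (mat N N (\<lambda>(i,j). if adj (vs!i) (vs!j) then 1 else 0) :: real mat)"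
  from ev obtain v where v: "v \<in> carrier_vec N" "v \<noteq> 0\<^sub>v N" "A *\<^sub>v v = k \<cdot>\<^sub>v v"
    unfolding eigenvalue_def eigenvector_def A_def N_def by auto
  define a where "a i j = (if adj (vs!i) (vs!j) then 1 else (0::real))" for i j
  have Av: "(\<Sum>j<N. a i j * v$j) = k * v$i" if "i < N" for i
  proof -
    have "(A *\<^sub>v v) $ i = k * v$i" using v(3) that v(1) by (simp add: A_def)
    moreover have "(A *\<^sub>v v) $ i = (\<Sum>j<N. a i j * v$j)"
      using that v(1) by (simp add: A_def scalar_prod_def a_def lessThan_atLeast0)
    ultimately show ?thesis by simp
  qed
  define s where "s C = (\<Sum>i<N. if mem C (vs!i) then v$i else 0)" for C
  have cnt': "(\<Sum>C\<in>I. (if mem C (vs!i) then 1 else 0) * (if mem C (vs!j) then 1 else (0::real)))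
      = (if i = j then real c else 0) + a i j" if "i < N" "j < N" for i j
  proof -
    have "(\<Sum>C\<in>I. (if mem C (vs!i) then 1 else 0) * (if mem C (vs!j) then 1 else (0::real)))
        = real (card {C\<in>I. mem C (vs!i) \<and> mem C (vs!j)})"
      using fin by (subst card_as_sum) (auto intro!: sum.cong)
    also have "\<dots> = (if i = j then real c else 0) + a i j"
      using cnt[of "vs!i" "vs!j"] that dist irr unfolding N_def a_def
      by (auto simp: nth_eq_iff_index_eq)
    finally show ?thesis .
  qed
  have "0 \<le> (\<Sum>C\<in>I. (s C)^2)" by (simp add: sum_nonneg)
  also have "\<dots> = (\<Sum>C\<in>I. \<Sum>i<N. \<Sum>j<N. (v$i * v$j) * ((if mem C (vs!i) then 1 else 0) * (if mem C (vs!j) then 1 else 0)))"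
    unfolding s_def power2_eq_square sum_product by (intro sum.cong refl) auto
  also have "\<dots> = (\<Sum>i<N. \<Sum>j<N. (v$i * v$j) * (\<Sum>C\<in>I. (if mem C (vs!i) then 1 else 0) * (if mem C (vs!j) then 1 else 0)))"
    by (simp add: sum_distrib_left sum.swap[of _ I])
  also have "\<dots> = (\<Sum>i<N. \<Sum>j<N. (v$i * v$j) * ((if i = j then real c else 0) + a i j))"
    by (simp add: cnt')
  also have "\<dots> = (\<Sum>i<N. (\<Sum>j<N. (if i = j then real c * (v$i)^2 else 0)) + v$i * (\<Sum>j<N. a i j * v$j))"
  proof (intro sum.cong refl)
    fix i assume "i \<in> {..<N}"
    have "(\<Sum>j<N. (v$i * v$j) * ((if i = j then real c else 0) + a i j))
       = (\<Sum>j<N. (if i = j then real c * (v$i)^2 else 0)) + (\<Sum>j<N. v$i * (a i j * v$j))"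
      unfolding sum.distrib[symmetric] by (intro sum.cong) (auto simp: algebra_simps power2_eq_square)
    then show "(\<Sum>j<N. (v$i * v$j) * ((if i = j then real c else 0) + a i j))
       = (\<Sum>j<N. (if i = j then real c * (v$i)^2 else 0)) + v$i * (\<Sum>j<N. a i j * v$j)"
      by (simp only: sum_distrib_left)
  qed
  also have "\<dots> = (\<Sum>i<N. real c * (v$i)^2 + v$i * (\<Sum>j<N. a i j * v$j))"
    by simp
  also have "\<dots> = (\<Sum>i<N. (real c + k) * (v$i)^2)"
  proof (intro sum.cong refl)
    fix i assume "i \<in> {..<N}"
    then have e: "(\<Sum>j<N. a i j * v$j) = k * v$i" using Av by simp
    show "real c * (v$i)^2 + v$i * (\<Sum>j<N. a i j * v$j) = (real c + k) * (v$i)^2"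
      unfolding e by (simp add: power2_eq_square algebra_simps)
  qed
  also have "\<dots> = (real c + k) * (\<Sum>i<N. (v$i)^2)"
    by (simp add: sum_distrib_left)
  finally have ge: "0 \<le> (real c + k) * (\<Sum>i<N. (v$i)^2)" .
  have "\<exists>i<N. v$i \<noteq> 0"
  proof (rule ccontr)
    assume "\<not> ?thesis"
    then have "v = 0\<^sub>v N" using v(1) by (intro eq_vecI) auto
    with v(2) show False by simp
  qed
  then obtain i0 where i0: "i0 < N" "v$i0 \<noteq> 0" by blast
  have "0 < (\<Sum>i<N. (v$i)^2)"
  proof -
    have "(v$i0)^2 \<le> (\<Sum>i<N. (v$i)^2)"
      using i0 by (intro member_le_sum) auto
    moreover have "0 < (v$i0)^2" using i0 by simp
    ultimately show ?thesis by linarith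
  qed
  with ge have "0 \<le> real c + k" by (simp add: zero_le_mult_iff)
  then show ?thesis by simp
qed

lemma sum_set_distinct_nth:
  assumes "distinct vs"
  shows "(\<Sum>x\<in>set vs. h x) = (\<Sum>j<length vs. h (vs!j))"
proof -
  have "set vs = (!) vs ` {..<length vs}" by (auto simp: in_set_conv_nth)
  moreover have "inj_on ((!) vs) {..<length vs}" using assms by (simp add: inj_on_nth)
  ultimately show ?thesis by (simp add: sum.reindex)
qed

lemma abstract_exists:
  fixes vs :: "'v list" and adj :: "'v \<Rightarrow> 'v \<Rightarrow> bool" and mem :: "'c \<Rightarrow> 'v \<Rightarrow> bool"
    and g :: "'v \<Rightarrow> real"
  assumes dist: "distinct vs" and fin: "finite I" and irr: "\<And>x. \<not> adj x x"
  and cnt: "\<And>x y. x \<in> set vs \<Longrightarrow> y \<in> set vs \<Longrightarrow>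
      card {C\<in>I. mem C x \<and> mem C y} = (if x = y then c else if adj x y then 1 else 0)"
  and gz: "\<And>C. C \<in> I \<Longrightarrow> (\<Sum>x\<in>{x\<in>set vs. mem C x}. g x) = 0"
  and x0: "x0 \<in> set vs" "g x0 \<noteq> 0"
  shows "eigenvalue (mat (length vs) (length vs) (\<lambda>(i,j). if adj (vs!i) (vs!j) then 1 else 0)) (- real c)"
proof -
  define N where "N = length vs"
  define A where "A = (mat N N (\<lambda>(i,j). if adj (vs!i) (vs!j) then 1 else 0) :: real mat)"
  define a where "a i j = (if adj (vs!i) (vs!j) then 1 else (0::real))" for i j
  define v where "v = vec N (\<lambda>i. g (vs!i))"
  have cnt': "(\<Sum>C\<in>I. (if mem C (vs!i) then 1 else 0) * (if mem C (vs!j) then 1 else (0::real)))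
      = (if i = j then real c else 0) + a i j" if "i < N" "j < N" for i j
  proof -
    have "(\<Sum>C\<in>I. (if mem C (vs!i) then 1 else 0) * (if mem C (vs!j) then 1 else (0::real)))
        = real (card {C\<in>I. mem C (vs!i) \<and> mem C (vs!j)})"
      using fin by (subst card_as_sum) (auto intro!: sum.cong)
    also have "\<dots> = (if i = j then real c else 0) + a i j"
      using cnt[of "vs!i" "vs!j"] that dist irr unfolding N_def a_def
      by (auto simp: nth_eq_iff_index_eq)
    finally show ?thesis .
  qed
  have zC: "(\<Sum>j<N. (if mem C (vs!j) then 1 else 0) * g (vs!j)) = 0" if "C \<in> I" for C
  proof -
    have "(\<Sum>j<N. (if mem C (vs!j) then 1 else 0) * g (vs!j)) = (\<Sum>x\<in>set vs. if mem C x then g x else 0)"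
      unfolding N_def by (subst sum_set_distinct_nth[OF dist]) (auto intro!: sum.cong)
    also have "\<dots> = (\<Sum>x\<in>{x\<in>set vs. mem C x}. g x)"
      by (simp add: sum.inter_filter)
    finally show ?thesis using gz[OF that] by simp
  qed
  have main: "(\<Sum>j<N. a i j * g (vs!j)) = - real c * g (vs!i)" if "i < N" for i
  proof -
    have "(\<Sum>j<N. a i j * g (vs!j)) + real c * g (vs!i)
       = (\<Sum>j<N. ((if i = j then real c else 0) + a i j) * g (vs!j))"
    proof -
      have "(\<Sum>j<N. ((if i = j then real c else 0) + a i j) * g (vs!j))
          = (\<Sum>j<N. (if i = j then real c * g (vs!j) else 0)) + (\<Sum>j<N. a i j * g (vs!j))"
        unfolding sum.distrib[symmetric] by (intro sum.cong) (auto simp: algebra_simps)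
      then show ?thesis using that by simp
    qed
    also have "\<dots> = (\<Sum>j<N. \<Sum>C\<in>I. (if mem C (vs!i) then 1 else 0) * ((if mem C (vs!j) then 1 else 0) * g (vs!j)))"
      using that by (intro sum.cong refl) (simp add: cnt'[symmetric] sum_distrib_right mult.assoc)
    also have "\<dots> = (\<Sum>C\<in>I. (if mem C (vs!i) then 1 else 0) * (\<Sum>j<N. (if mem C (vs!j) then 1 else 0) * g (vs!j)))"
      by (simp add: sum.swap[of _ "{..<N}"] sum_distrib_left)
    also have "\<dots> = 0" using zC by simp
    finally show ?thesis by linarith
  qed
  have "v \<in> carrier_vec N" by (simp add: v_def)
  moreover have "v \<noteq> 0\<^sub>v N"
  proof
    assume "v = 0\<^sub>v N"
    obtain i where "i < N" "vs!i = x0" using x0(1) unfolding N_def by (auto simp: in_set_conv_nth)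
    then have "v $ i = g x0" by (simp add: v_def)
    with \<open>v = 0\<^sub>v N\<close> \<open>i < N\<close> x0(2) show False by simp
  qed
  moreover have "A *\<^sub>v v = (- real c) \<cdot>\<^sub>v v"
  proof (rule eq_vecI)
    fix i assume "i < dim_vec ((- real c) \<cdot>\<^sub>v v)"
    then have i: "i < N" by (simp add: v_def)
    have "(A *\<^sub>v v) $ i = (\<Sum>j<N. a i j * g (vs!j))"
      using i by (simp add: A_def v_def scalar_prod_def a_def lessThan_atLeast0)
    then show "(A *\<^sub>v v) $ i = ((- real c) \<cdot>\<^sub>v v) $ i"
      using i main by (simp add: v_def)
  qed (simp add: A_def v_def)
  ultimately show ?thesis
    unfolding eigenvalue_def eigenvector_def A_def N_def by (auto simp: A_def)
qed

lemma SR_fin: "finite (SR_vertices m n)"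
proof -
  have "SR_vertices m n \<subseteq> {xs. set xs \<subseteq> {..n} \<and> length xs = m}"
    by (auto simp: SR_vertices_def member_le_sum_list)
  moreover have "finite {xs. set xs \<subseteq> {..n} \<and> length xs = m}"
    by (rule finite_lists_length_eq) simp
  ultimately show ?thesis by (rule finite_subset)
qed

lemma SR_enum: "distinct (SR_enum m n) \<and> set (SR_enum m n) = SR_vertices m n"
proof -
  have "\<exists>vs. distinct vs \<and> set vs = SR_vertices m n"
    using finite_distinct_list[OF SR_fin] by blast
  then show ?thesis unfolding SR_enum_def by (rule someI_ex)
qed

lemma SR_adj_irr: "\<not> SR_adj m x x"
  by (simp add: SR_adj_def)

lemma SR_matrix: "SR_adj_matrix m n = mat (length (SR_enum m n)) (length (SR_enum m n))
   (\<lambda>(i,j). if SR_adj m (SR_enum m n ! i) (SR_enum m n ! j) then 1 else 0)"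
  by (simp add: SR_adj_matrix_def Let_def)

lemma sum_agree:
  fixes x y :: "nat list"
  assumes "length x = m" "length y = m" "S \<subseteq> {..<m}" "\<forall>k<m. k \<notin> S \<longrightarrow> x!k = y!k"
  shows "sum_list x + (\<Sum>k\<in>S. y!k) = sum_list y + (\<Sum>k\<in>S. x!k)"
proof -
  have fS: "finite S" using assms(3) finite_subset by blast
  have "sum_list x = (\<Sum>k\<in>{..<m}-S. x!k) + (\<Sum>k\<in>S. x!k)"
    using assms(1,3) fS by (simp add: sum_list_sum_nth atLeast0LessThan sum.subset_diff[of S "{..<m}"])
  moreover have "sum_list y = (\<Sum>k\<in>{..<m}-S. y!k) + (\<Sum>k\<in>S. y!k)"
    using assms(2,3) fS by (simp add: sum_list_sum_nth atLeast0LessThan sum.subset_diff[of S "{..<m}"])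
  moreover have "(\<Sum>k\<in>{..<m}-S. x!k) = (\<Sum>k\<in>{..<m}-S. y!k)"
    using assms(4) by (intro sum.cong) auto
  ultimately show ?thesis by simp
qed

lemma gauss_choose: "(\<Sum>k<m. k) = m choose 2"
proof (induction m)
  case 0 then show ?case by simp
next
  case (Suc m)
  have "(Suc m) choose 2 = (m choose 1) + (m choose 2)"
    using binomial_Suc_Suc[of m 1] by (simp add: numeral_2_eq_2)
  then show ?case using Suc by simp
qed

lemma card_pairs: "card {(i,j). i<j \<and> j<(m::nat)} = m choose 2"
proof (induction m)
  case 0 then show ?case by simp
next
  case (Suc m)
  have eq: "{(i,j). i<j \<and> j<Suc m} = {(i,j). i<j \<and> j<m} \<union> (\<lambda>i. (i,m)) ` {..<m}"
    by auto
  have fin: "finite {(i,j). i<j \<and> j<(m::nat)}"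
    by (rule finite_subset[of _ "{..<m} \<times> {..<m}"]) auto
  have "card {(i,j). i<j \<and> j<Suc m} = card {(i,j). i<j \<and> j<m} + card ((\<lambda>i. (i,m)) ` {..<m})"
    unfolding eq using fin by (intro card_Un_disjoint) auto
  also have "\<dots> = (m choose 2) + m" using Suc by (simp add: card_image inj_on_def)
  also have "\<dots> = (Suc m) choose 2"
    using binomial_Suc_Suc[of m 1] by (simp add: numeral_2_eq_2)
  finally show ?case .
qed

definition I1 :: "nat \<Rightarrow> nat \<Rightarrow> (nat \<times> nat \<times> nat list) set" where
  "I1 m n = {(i,j,w). i<j \<and> j<m \<and> w \<in> SR_vertices m n \<and> w!j = 0}"

definition mem1 :: "nat \<Rightarrow> nat \<times> nat \<times> nat list \<Rightarrow> nat list \<Rightarrow> bool" where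
  "mem1 m C x = (case C of (i,j,w) \<Rightarrow> \<forall>k<m. k\<noteq>i \<longrightarrow> k\<noteq>j \<longrightarrow> x!k = w!k)"

lemma I1_fin: "finite (I1 m n)"
proof -
  have "I1 m n \<subseteq> {..<m} \<times> {..<m} \<times> SR_vertices m n" by (auto simp: I1_def)
  moreover have "finite ({..<m} \<times> {..<m} \<times> SR_vertices m n)" using SR_fin by simp
  ultimately show ?thesis by (rule finite_subset)
qed

lemma count1:
  assumes x: "x \<in> SR_vertices m n" and y: "y \<in> SR_vertices m n"
  shows "card {C\<in>I1 m n. mem1 m C x \<and> mem1 m C y}
     = (if x = y then m choose 2 else if SR_adj m x y then 1 else 0)"
proof -
  define D where "D = {k. k<m \<and> x!k \<noteq> y!k}"
  have Dmem: "k \<in> D \<longleftrightarrow> k < m \<and> x!k \<noteq> y!k" for k by (simp add: D_def)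
  define f where "f = (\<lambda>(i::nat,j::nat). (i,j, x[i := x!i + x!j, j := 0]))"
  have lx: "length x = m" "sum_list x = n" and ly: "length y = m" "sum_list y = n"
    using x y by (auto simp: SR_vertices_def)
  have eq: "{C\<in>I1 m n. mem1 m C x \<and> mem1 m C y} = f ` {(i,j). i<j \<and> j<m \<and> D \<subseteq> {i,j}}"
  proof (intro equalityI subsetI)
    fix C assume C: "C \<in> {C\<in>I1 m n. mem1 m C x \<and> mem1 m C y}"
    obtain i j w where Cw: "C = (i,j,w)" by (cases C) auto
    from C have ij: "i<j" "j<m" and w: "length w = m" "sum_list w = n" "w!j = 0"
      and mx: "\<forall>k<m. k\<noteq>i \<longrightarrow> k\<noteq>j \<longrightarrow> x!k = w!k"
      and my: "\<forall>k<m. k\<noteq>i \<longrightarrow> k\<noteq>j \<longrightarrow> y!k = w!k"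
      by (auto simp: I1_def mem1_def Cw SR_vertices_def)
    have "D \<subseteq> {i,j}"
    proof
      fix k assume "k \<in> D"
      then have k: "k<m" "x!k \<noteq> y!k" by (auto simp: Dmem)
      show "k \<in> {i,j}" using mx[rule_format, of k] my[rule_format, of k] k by (metis insertCI)
    qed
    moreover have "w = x[i := x!i + x!j, j := 0]"
    proof -
      have "sum_list x + (\<Sum>k\<in>{i,j}. w!k) = sum_list w + (\<Sum>k\<in>{i,j}. x!k)"
        by (rule sum_agree[OF lx(1) w(1)]) (use ij mx in auto)
      then have "w!i = x!i + x!j" using lx w ij by simp
      then show ?thesis using lx w ij mx by (intro nth_equalityI) (auto simp: nth_list_update)
    qed
    ultimately show "C \<in> f ` {(i,j). i<j \<and> j<m \<and> D \<subseteq> {i,j}}"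
      using ij Cw f_def by auto
  next
    fix C assume "C \<in> f ` {(i,j). i<j \<and> j<m \<and> D \<subseteq> {i,j}}"
    then obtain i j where ij: "i<j" "j<m" "D \<subseteq> {i,j}" and C: "C = f (i,j)" by auto
    let ?w = "x[i := x!i + x!j, j := 0]"
    have "?w \<in> SR_vertices m n"
      using lx ij by (simp add: SR_vertices_def sum_list_update nth_list_update)
    moreover have "mem1 m C x" using C ij by (auto simp: f_def mem1_def)
    moreover have "mem1 m C y"
    proof -
      have "y!k = ?w!k" if "k<m" "k\<noteq>i" "k\<noteq>j" for k
      proof -
        have "k \<notin> D" using ij(3) that by blast
        then have "x!k = y!k" using that(1) Dmem by blast
        then show ?thesis using that by simp
      qed
      then show ?thesis using C by (simp add: f_def mem1_def)
    qed
    ultimately show "C \<in> {C\<in>I1 m n. mem1 m C x \<and> mem1 m C y}"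
      using C ij lx by (auto simp: f_def I1_def)
  qed
  have inj: "inj_on f {(i,j). i<j \<and> j<m \<and> D \<subseteq> {i,j}}"
    by (auto simp: f_def inj_on_def)
  have ceq: "card {C\<in>I1 m n. mem1 m C x \<and> mem1 m C y} = card {(i,j). i<j \<and> j<m \<and> D \<subseteq> {i,j}}"
    unfolding eq using inj by (rule card_image)
  show ?thesis
  proof (cases "x = y")
    case True
    then have "D = {}" by (simp add: D_def)
    then show ?thesis using ceq True card_pairs[of m] by simp
  next
    case False
    have Dne: "D \<noteq> {}"
    proof
      assume D0: "D = {}"
      have "x!k = y!k" if "k < m" for k using that Dmem D0 by blast
      then have "x = y" using lx ly by (intro nth_equalityI) auto
      with False show False by simp
    qed
    have Dsing: "D \<noteq> {a}" for a
    proof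
      assume Da: "D = {a}"
      then have a: "a < m" "x!a \<noteq> y!a" using Dmem by blast+
      have ag: "\<forall>k<m. k \<notin> {a} \<longrightarrow> x!k = y!k" using Da Dmem by blast
      have "sum_list x + (\<Sum>k\<in>{a}. y!k) = sum_list y + (\<Sum>k\<in>{a}. x!k)"
        by (rule sum_agree[OF lx(1) ly(1)]) (use a ag in auto)
      then have "x!a = y!a" using lx ly by simp
      then show False using a by simp
    qed
    have finD: "finite D" by (simp add: D_def)
    show ?thesis
    proof (cases "SR_adj m x y")
      case True
      then have "card D = 2" by (simp add: SR_adj_def D_def)
      then obtain a0 b0 where ab0: "D = {a0,b0}" "a0 \<noteq> b0" by (auto simp: card_2_iff)
      obtain a b where ab: "D = {a,b}" "a < b"
      proof (cases "a0 < b0")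
        case True then show ?thesis using that[of a0 b0] ab0 by simp
      next
        case False then have "b0 < a0" using ab0(2) by simp
        then show ?thesis using that[of b0 a0] ab0 by (simp add: insert_commute)
      qed
      have abm: "b < m" using ab Dmem by blast
      have "{(i,j). i<j \<and> j<m \<and> D \<subseteq> {i,j}} = {(a,b)}"
      proof (intro equalityI subsetI)
        fix z assume "z \<in> {(i,j). i<j \<and> j<m \<and> D \<subseteq> {i,j}}"
        then obtain i j where z: "z = (i,j)" "i<j" "{a,b} \<subseteq> {i,j}" using ab by auto
        then have "a \<in> {i,j}" "b \<in> {i,j}" by auto
        then have "a = i \<and> b = j" using z(2) ab(2) by auto
        then show "z \<in> {(a,b)}" using z by simp
      next
        fix z assume "z \<in> {(a,b)}"
        then show "z \<in> {(i,j). i<j \<and> j<m \<and> D \<subseteq> {i,j}}" using ab abm by auto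
      qed
      then show ?thesis using ceq True False by simp
    next
      case nadj: False
      have "card D \<noteq> 2" using nadj by (simp add: SR_adj_def D_def)
      have e: "{(i,j). i<j \<and> j<m \<and> D \<subseteq> {i,j}} = {}"
      proof (rule ccontr)
        assume "\<not> ?thesis"
        then obtain i j where ij: "i<j" "D \<subseteq> {i,j}" by auto
        have "card D \<le> card {i,j}" using ij(2) by (intro card_mono) auto
        then have "card D \<le> 2" using ij(1) by simp
        then have "card D = 1" using Dne finD \<open>card D \<noteq> 2\<close> by (cases "card D") auto
        then obtain a where "D = {a}" by (auto simp: card_1_singleton_iff)
        then show False using Dsing by blast
      qed
      have "card {(i,j). i<j \<and> j<m \<and> D \<subseteq> {i,j}} = 0" unfolding e by simp
      then show ?thesis using ceq nadj False by simp
    qed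
  qed
qed

definition I2 :: "nat \<Rightarrow> nat \<Rightarrow> (nat list \<times> nat) set" where
  "I2 m n = {(w,t). 1 \<le> t \<and> t \<le> n \<and> length w = m \<and> sum_list w + t = n}"

definition mem2 :: "nat \<Rightarrow> nat list \<times> nat \<Rightarrow> nat list \<Rightarrow> bool" where
  "mem2 m C x = (case C of (w,t) \<Rightarrow> \<exists>k<m. x = w[k := w!k + t])"

lemma I2_fin: "finite (I2 m n)"
proof -
  have "I2 m n \<subseteq> {w. set w \<subseteq> {..n} \<and> length w = m} \<times> {..n}"
    by (auto simp: I2_def dest!: member_le_sum_list)
  moreover have "finite ({w. set w \<subseteq> {..n} \<and> length w = m} \<times> {..n})"
    using finite_lists_length_eq[of "{..n}" m] by simp
  ultimately show ?thesis by (rule finite_subset)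
qed

lemma diff_two:
  fixes w :: "nat list"
  assumes "k < length w" "l < length w" "k \<noteq> l" "1 \<le> t"
  shows "{i. i < length w \<and> w[k := w!k + t] ! i \<noteq> w[l := w!l + t] ! i} = {k,l}"
proof (intro equalityI subsetI)
  fix i assume "i \<in> {i. i < length w \<and> w[k := w!k + t] ! i \<noteq> w[l := w!l + t] ! i}"
  then have "i < length w" "w[k := w!k + t] ! i \<noteq> w[l := w!l + t] ! i" by auto
  then show "i \<in> {k,l}" by (cases "i = k"; cases "i = l") auto
next
  fix i assume "i \<in> {k,l}"
  then show "i \<in> {i. i < length w \<and> w[k := w!k + t] ! i \<noteq> w[l := w!l + t] ! i}"
    using assms by auto
qed

lemma count2:
  assumes x: "x \<in> SR_vertices m n" and y: "y \<in> SR_vertices m n"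
  shows "card {C\<in>I2 m n. mem2 m C x \<and> mem2 m C y}
     = (if x = y then n else if SR_adj m x y then 1 else 0)"
proof -
  have lx: "length x = m" "sum_list x = n" and ly: "length y = m" "sum_list y = n"
    using x y by (auto simp: SR_vertices_def)
  define D where "D = {k. k<m \<and> x!k \<noteq> y!k}"
  show ?thesis
  proof (cases "x = y")
    case True
    define f where "f = (\<lambda>(k,t). (x[k := x!k - t], t::nat))"
    define T where "T = (SIGMA k:{..<m}. {1..x!k})"
    have eq: "{C\<in>I2 m n. mem2 m C x \<and> mem2 m C y} = f ` T"
    proof (intro equalityI subsetI)
      fix C assume C: "C \<in> {C\<in>I2 m n. mem2 m C x \<and> mem2 m C y}"
      obtain w t where Cw: "C = (w,t)" by (cases C) auto
      from C obtain k where k: "k < m" "x = w[k := w!k + t]" and wt: "1 \<le> t" "length w = m"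
        by (auto simp: I2_def mem2_def Cw)
      have xk: "x!k = w!k + t" using k wt by simp
      have wx: "w = x[k := x!k - t]" using k wt by simp
      have kT: "(k,t) \<in> T" using k(1) wt(1) xk unfolding T_def by simp
      have "C = f (k,t)" using Cw wx by (simp add: f_def)
      then show "C \<in> f ` T" using kT by blast
    next
      fix C assume "C \<in> f ` T"
      then obtain k t where kt: "k < m" "1 \<le> t" "t \<le> x!k" and C: "C = (x[k := x!k - t], t)"
        by (auto simp: f_def T_def)
      have "x!k \<le> n" using lx kt elem_le_sum_list[of k x] by simp
      moreover have "sum_list (x[k := x!k - t]) + t = n"
      proof -
        have e: "sum_list (x[k := x!k - t]) = n + (x!k - t) - x!k" using lx kt by (simp add: sum_list_update)
        show ?thesis using e \<open>x!k \<le> n\<close> kt by arith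
      qed
      moreover have "x = (x[k := x!k - t])[k := (x[k := x!k - t])!k + t]" using kt lx by simp
      ultimately show "C \<in> {C\<in>I2 m n. mem2 m C x \<and> mem2 m C y}"
        using C kt lx True by (auto simp: I2_def mem2_def)
    qed
    have inj: "inj_on f T"
    proof (rule inj_onI)
      fix a b assume a: "a \<in> T" and b: "b \<in> T" and fab: "f a = f b"
      obtain k t where at: "a = (k,t)" by (cases a) auto
      obtain k' t' where bt: "b = (k',t')" by (cases b) auto
      from a b at bt have r: "k<m" "k'<m" "1 \<le> t" "t \<le> x!k" "1 \<le> t'" "t' \<le> x!k'" by (auto simp: T_def)
      from fab at bt have tt: "t = t'" and ll: "x[k := x!k - t] = x[k' := x!k' - t']" by (auto simp: f_def)
      have "k = k'"
      proof (rule ccontr)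
        assume "k \<noteq> k'"
        then have "x[k := x!k - t] ! k = x!k - t" "x[k' := x!k' - t'] ! k = x!k" using r lx by auto
        with ll r show False by simp
      qed
      then show "a = b" using at bt tt by simp
    qed
    have "card T = (\<Sum>k<m. x!k)" by (simp add: T_def)
    also have "\<dots> = n" using lx by (simp add: sum_list_sum_nth atLeast0LessThan)
    finally show ?thesis using eq inj True by (simp add: card_image)
  next
    case False
    show ?thesis
    proof (cases "SR_adj m x y")
      case adj: True
      then have "card D = 2" by (simp add: SR_adj_def D_def)
      then obtain a b where ab: "D = {a,b}" "a \<noteq> b" by (auto simp: card_2_iff)
      have abm: "a < m" "b < m" "x!a \<noteq> y!a" "x!b \<noteq> y!b" using ab by (auto simp: D_def)
      have agree: "\<forall>k<m. k \<notin> {a,b} \<longrightarrow> x!k = y!k" using ab by (auto simp: D_def)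
      have sab: "x!a + x!b = y!a + y!b"
      proof -
        have "sum_list x + (\<Sum>k\<in>{a,b}. y!k) = sum_list y + (\<Sum>k\<in>{a,b}. x!k)"
          by (rule sum_agree[OF lx(1) ly(1)]) (use abm agree in auto)
        then show ?thesis using lx ly ab by simp
      qed
      obtain p q where pq: "(p = a \<and> q = b) \<or> (p = b \<and> q = a)" "x!p > y!p" "x!q < y!q"
      proof (cases "x!a > y!a")
        case True
        then have "x!b < y!b" using sab by linarith
        then show ?thesis using that[of a b] True by auto
      next
        case False
        then have "x!a < y!a" using abm by linarith
        moreover then have "x!b > y!b" using sab by linarith
        ultimately show ?thesis using that[of b a] by auto
      qed
      have pqm: "p < m" "q < m" using pq(1) abm by auto
      have pqne: "p \<noteq> q" using pq(1) ab(2) by auto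
      have agree': "\<forall>k<m. k \<noteq> p \<longrightarrow> k \<noteq> q \<longrightarrow> x!k = y!k" using agree pq(1) by auto
      have spq: "x!p + x!q = y!p + y!q" using pq(1)
      proof (elim disjE)
        assume "p = a \<and> q = b" then show ?thesis using sab by simp
      next
        assume "p = b \<and> q = a" then show ?thesis using sab by simp
      qed
      define t where "t = x!p - y!p"
      define w where "w = x[p := y!p]"
      have sq: "y!q = x!q + t" using spq pq(2) unfolding t_def by arith
      have "{C\<in>I2 m n. mem2 m C x \<and> mem2 m C y} = {(w,t)}"
      proof (intro equalityI subsetI)
        fix C assume C: "C \<in> {C\<in>I2 m n. mem2 m C x \<and> mem2 m C y}"
        obtain w' t' where Cw: "C = (w',t')" by (cases C) auto
        from C obtain k l where k: "k < m" "x = w'[k := w'!k + t']" and l: "l < m" "y = w'[l := w'!l + t']"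
          and wt: "1 \<le> t'" "length w' = m"
          by (auto simp: I2_def mem2_def Cw)
        have "k \<noteq> l" using k l False by auto
        then have Dkl: "D = {k,l}" unfolding D_def using diff_two[of k w' l t'] k l wt by simp
        have "x!k > y!k" using k l wt \<open>k \<noteq> l\<close> by simp
        have "k \<in> {p,q}" using Dkl ab(1) pq(1) by auto
        then have "k = p" using \<open>x!k > y!k\<close> pq(3) by auto
        then have "t' = t" "w' = w" using k l wt \<open>k \<noteq> l\<close> by (auto simp: t_def w_def)
        then show "C \<in> {(w,t)}" using Cw by simp
      next
        fix C assume "C \<in> {(w,t)}"
        then have C: "C = (w,t)" by simp
        have t1: "1 \<le> t" using pq(2) unfolding t_def by simp
        have lw: "length w = m" using lx by (simp add: w_def)
        have "x!p \<le> n" using lx pqm elem_le_sum_list[of p x] by simp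
        then have tn: "t \<le> n" unfolding t_def by simp
        have sw: "sum_list w + t = n"
      proof -
        have e: "sum_list w = n + y!p - x!p" using lx pqm by (simp add: sum_list_update w_def)
        show ?thesis using e \<open>x!p \<le> n\<close> pq(2) unfolding t_def by arith
      qed
        have mx: "x = w[p := w!p + t]" using pqm lx pq(2) by (simp add: w_def t_def)
        have my: "y = w[q := w!q + t]"
          using pqm lx ly pqne agree' sq by (intro nth_equalityI) (auto simp: w_def nth_list_update)
        show "C \<in> {C\<in>I2 m n. mem2 m C x \<and> mem2 m C y}"
          using C t1 tn lw sw mx my pqm by (auto simp: I2_def mem2_def)
      qed
      then show ?thesis using False adj by simp
    next
      case nadj: False
      have e: "{C\<in>I2 m n. mem2 m C x \<and> mem2 m C y} = {}"
      proof (rule ccontr)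
        assume "\<not> ?thesis"
        then obtain w' t' where C: "(w',t') \<in> {C\<in>I2 m n. mem2 m C x \<and> mem2 m C y}" by auto
        from C obtain k l where k: "k < m" "x = w'[k := w'!k + t']" and l: "l < m" "y = w'[l := w'!l + t']"
          and wt: "1 \<le> t'" "length w' = m"
          by (auto simp: I2_def mem2_def)
        have "k \<noteq> l" using k l False by auto
        then have Dkl: "D = {k,l}" unfolding D_def using diff_two[of k w' l t'] k l wt by simp
        then have "card D = 2" using \<open>k \<noteq> l\<close> by simp
        then show False using nadj by (simp add: SR_adj_def D_def)
      qed
      have "card {C\<in>I2 m n. mem2 m C x \<and> mem2 m C y} = 0" unfolding e by simp
      then show ?thesis using False nadj by simp
    qed
  qed
qed

definition dB :: "nat \<Rightarrow> nat \<Rightarrow> nat \<Rightarrow> nat" where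
  "dB m n k = k + (if k = m - 1 then n - (m choose 2) else 0)"

definition gB :: "nat \<Rightarrow> nat \<Rightarrow> nat list \<Rightarrow> real" where
  "gB m n x = (\<Sum>p\<in>{p. p permutes {..<m} \<and> x = map (\<lambda>k. dB m n (p k)) [0..<m]}. real_of_int (sign p))"

lemma sign_comp_transpose:
  assumes "p permutes {..<(m::nat)}" "i \<noteq> j"
  shows "sign (p \<circ> Transposition.transpose i j) = - sign p"
proof -
  have "permutation p" using assms(1) by (rule permutes_imp_permutation[rotated]) simp
  moreover have "permutation (Transposition.transpose i j)" by (simp add: permutation_swap_id)
  ultimately show ?thesis using assms(2) by (simp add: sign_compose sign_swap_id)
qed

lemma gB_swap:
  assumes lx: "length x = m" and ij: "i < m" "j < m" "i \<noteq> j"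
  shows "gB m n (map (\<lambda>k. x ! Transposition.transpose i j k) [0..<m]) = - gB m n x"
proof -
  define \<tau> where "\<tau> = Transposition.transpose i j"
  define P where "P = {p. p permutes {..<m} \<and> x = map (\<lambda>k. dB m n (p k)) [0..<m]}"
  define x' where "x' = map (\<lambda>k. x ! \<tau> k) [0..<m]"
  have tperm: "\<tau> permutes {..<m}" using ij by (simp add: \<tau>_def permutes_swap_id)
  have tau_lt: "\<tau> k < m" if "k < m" for k using that ij by (simp add: \<tau>_def transpose_def)
  have tt: "\<tau> \<circ> \<tau> = id" by (simp add: \<tau>_def)
  have P': "{p. p permutes {..<m} \<and> x' = map (\<lambda>k. dB m n (p k)) [0..<m]} = (\<lambda>p. p \<circ> \<tau>) ` P"
  proof (intro equalityI subsetI)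
    fix q assume q: "q \<in> {p. p permutes {..<m} \<and> x' = map (\<lambda>k. dB m n (p k)) [0..<m]}"
    then have qp: "q permutes {..<m}" and qx: "x' = map (\<lambda>k. dB m n (q k)) [0..<m]" by auto
    have "q \<circ> \<tau> permutes {..<m}" using tperm qp by (rule permutes_compose)
    moreover have "x = map (\<lambda>k. dB m n ((q \<circ> \<tau>) k)) [0..<m]"
    proof (rule nth_equalityI)
      show "length x = length (map (\<lambda>k. dB m n ((q \<circ> \<tau>) k)) [0..<m])" using lx by simp
    next
      fix k assume "k < length x"
      then have k: "k < m" using lx by simp
      have "x' ! \<tau> k = x ! \<tau> (\<tau> k)" using tau_lt[OF k] by (simp add: x'_def)
      also have "\<dots> = x ! k" by (simp add: \<tau>_def)
      finally have "x ! k = x' ! \<tau> k" by simp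
      also have "\<dots> = dB m n (q (\<tau> k))" using qx tau_lt[OF k] by simp
      finally show "x ! k = map (\<lambda>k. dB m n ((q \<circ> \<tau>) k)) [0..<m] ! k" using k by simp
    qed
    ultimately have "q \<circ> \<tau> \<in> P" by (simp add: P_def)
    moreover have "q = (q \<circ> \<tau>) \<circ> \<tau>" by (simp add: o_assoc[symmetric] tt)
    ultimately show "q \<in> (\<lambda>p. p \<circ> \<tau>) ` P" by blast
  next
    fix q assume "q \<in> (\<lambda>p. p \<circ> \<tau>) ` P"
    then obtain p where p: "p \<in> P" and qp: "q = p \<circ> \<tau>" by auto
    from p have pp: "p permutes {..<m}" and px: "x = map (\<lambda>k. dB m n (p k)) [0..<m]" by (auto simp: P_def)
    have "q permutes {..<m}" unfolding qp using tperm pp by (intro permutes_compose)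
    moreover have "x' = map (\<lambda>k. dB m n (q k)) [0..<m]"
      by (rule nth_equalityI) (use tau_lt px in \<open>auto simp: x'_def qp\<close>)
    ultimately show "q \<in> {p. p permutes {..<m} \<and> x' = map (\<lambda>k. dB m n (p k)) [0..<m]}" by simp
  qed
  have inj: "inj_on (\<lambda>p. p \<circ> \<tau>) P"
  proof (rule inj_onI)
    fix p q assume "p \<circ> \<tau> = q \<circ> \<tau>"
    then have "p \<circ> \<tau> \<circ> \<tau> = q \<circ> \<tau> \<circ> \<tau>" by simp
    then show "p = q" by (simp add: o_assoc[symmetric] tt)
  qed
  have "gB m n x' = (\<Sum>p\<in>(\<lambda>p. p \<circ> \<tau>) ` P. real_of_int (sign p))"
    unfolding gB_def P' ..
  also have "\<dots> = (\<Sum>p\<in>P. real_of_int (sign (p \<circ> \<tau>)))"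
    using inj by (simp add: sum.reindex)
  also have "\<dots> = (\<Sum>p\<in>P. - real_of_int (sign p))"
  proof (intro sum.cong refl)
    fix p assume "p \<in> P"
    then have "p permutes {..<m}" by (simp add: P_def)
    then show "real_of_int (sign (p \<circ> \<tau>)) = - real_of_int (sign p)"
      unfolding \<tau>_def using sign_comp_transpose[of p m i j] ij(3) by simp
  qed
  also have "\<dots> = - gB m n x" by (simp add: gB_def P_def sum_negf)
  finally show ?thesis by (simp add: x'_def \<tau>_def)
qed

lemma cliqueB:
  assumes C: "(i,j,w) \<in> I1 m n"
  shows "(\<Sum>x\<in>{x\<in>SR_vertices m n. mem1 m (i,j,w) x}. gB m n x) = 0"
proof -
  from C have ij: "i<j" "j<m" and lw: "length w = m" "sum_list w = n" and wj: "w!j = 0"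
    by (auto simp: I1_def SR_vertices_def)
  define s where "s = w!i"
  have sn: "s \<le> n" using lw ij elem_le_sum_list[of i w] by (simp add: s_def)
  define F where "F a = w[i := a, j := s - a]" for a
  have eq: "{x\<in>SR_vertices m n. mem1 m (i,j,w) x} = F ` {..s}"
  proof (intro equalityI subsetI)
    fix x assume "x \<in> {x\<in>SR_vertices m n. mem1 m (i,j,w) x}"
    then have lx: "length x = m" "sum_list x = n" and mx: "\<forall>k<m. k\<noteq>i \<longrightarrow> k\<noteq>j \<longrightarrow> x!k = w!k"
      by (auto simp: SR_vertices_def mem1_def)
    have "sum_list x + (\<Sum>k\<in>{i,j}. w!k) = sum_list w + (\<Sum>k\<in>{i,j}. x!k)"
      by (rule sum_agree[OF lx(1) lw(1)]) (use ij mx in auto)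
    then have sx: "x!i + x!j = s" using lx lw ij wj by (simp add: s_def)
    have "x = F (x!i)"
      unfolding F_def using lx lw ij mx sx by (intro nth_equalityI) (auto simp: nth_list_update)
    moreover have "x!i \<in> {..s}" using sx by simp
    ultimately show "x \<in> F ` {..s}" by blast
  next
    fix x assume "x \<in> F ` {..s}"
    then obtain a where a: "a \<le> s" and xa: "x = F a" by auto
    have e: "sum_list (F a) = n + a - s + (s - a) - 0"
      using lw ij wj by (simp add: F_def sum_list_update nth_list_update s_def)
    have "sum_list x = n" using e a sn xa by simp
    moreover have "length x = m" using xa lw by (simp add: F_def)
    moreover have "mem1 m (i,j,w) x" using xa by (simp add: F_def mem1_def)
    ultimately show "x \<in> {x\<in>SR_vertices m n. mem1 m (i,j,w) x}" by (simp add: SR_vertices_def)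
  qed
  have inj: "inj_on F {..s}"
  proof (rule inj_onI)
    fix a b assume "F a = F b"
    then have "F a ! i = F b ! i" by simp
    then show "a = b" using ij lw by (simp add: F_def nth_list_update)
  qed
  define G where "G a = gB m n (F a)" for a
  have Gs: "G (s - a) = - G a" if "a \<le> s" for a
  proof -
    have "F (s - a) = map (\<lambda>k. F a ! Transposition.transpose i j k) [0..<m]"
    proof (rule nth_equalityI)
      show "length (F (s - a)) = length (map (\<lambda>k. F a ! Transposition.transpose i j k) [0..<m])"
        using lw by (simp add: F_def)
    next
      fix k assume "k < length (F (s - a))"
      then have k: "k < m" using lw by (simp add: F_def)
      show "F (s - a) ! k = map (\<lambda>k. F a ! Transposition.transpose i j k) [0..<m] ! k"
        using k ij lw that by (cases "k = i"; cases "k = j") (simp_all add: F_def nth_list_update)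
    qed
    then show ?thesis unfolding G_def using gB_swap[of "F a" m i j n] lw ij by (simp add: F_def)
  qed
  have "(\<Sum>x\<in>{x\<in>SR_vertices m n. mem1 m (i,j,w) x}. gB m n x) = (\<Sum>a\<le>s. G a)"
    unfolding eq G_def using inj by (simp add: sum.reindex)
  moreover have "(\<Sum>a\<le>s. G a) = (\<Sum>a\<le>s. - G a)"
    by (rule sum.reindex_bij_witness[of _ "\<lambda>a. s - a" "\<lambda>a. s - a"]) (auto simp: Gs)
  moreover have "(\<Sum>a\<le>s. - G a) = - (\<Sum>a\<le>s. G a)" by (rule sum_negf)
  ultimately show ?thesis by linarith
qed

lemma perm_id_on:
  assumes "p permutes {..<(m::nat)}" "\<forall>k<m. p k = k"
  shows "p = id"
proof
  fix k show "p k = id k"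
  proof (cases "k < m")
    case True then show ?thesis using assms(2) by simp
  next
    case False then show ?thesis using permutes_not_in[OF assms(1)] by simp
  qed
qed

lemma x0B:
  assumes "m choose 2 \<le> n" "0 < m \<or> n = 0"
  shows "map (dB m n) [0..<m] \<in> SR_vertices m n \<and> gB m n (map (dB m n) [0..<m]) = 1"
proof
  have "sum_list (map (dB m n) [0..<m]) = (\<Sum>k<m. dB m n k)"
    by (simp add: sum_list_sum_nth atLeast0LessThan)
  also have "\<dots> = (\<Sum>k<m. k) + (\<Sum>k<m. if k = m - 1 then n - (m choose 2) else 0)"
    by (simp add: dB_def sum.distrib)
  also have "\<dots> = n"
  proof (cases "m = 0")
    case True then show ?thesis using assms by simp
  next
    case False
    then have "m - 1 \<in> {..<m}" by simp
    then have "(\<Sum>k<m. if k = m - 1 then n - (m choose 2) else 0) = n - (m choose 2)"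
      by (simp add: sum.delta')
    then show ?thesis using assms(1) by (simp add: gauss_choose)
  qed
  finally show "map (dB m n) [0..<m] \<in> SR_vertices m n" by (simp add: SR_vertices_def)
next
  have inj: "k = l" if "k < m" "l < m" "dB m n k = dB m n l" for k l
    using that by (auto simp: dB_def split: if_splits)
  have "{p. p permutes {..<m} \<and> map (dB m n) [0..<m] = map (\<lambda>k. dB m n (p k)) [0..<m]} = {id}"
  proof (intro equalityI subsetI)
    fix p assume "p \<in> {p. p permutes {..<m} \<and> map (dB m n) [0..<m] = map (\<lambda>k. dB m n (p k)) [0..<m]}"
    then have pp: "p permutes {..<m}" and e: "map (dB m n) [0..<m] = map (\<lambda>k. dB m n (p k)) [0..<m]" by auto
    have "p k = k" if "k < m" for k
    proof -
      have "dB m n k = dB m n (p k)" using e that by simp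
      moreover have "p k < m" using permutes_in_image[OF pp, of k] that by simp
      ultimately show ?thesis using inj that by metis
    qed
    then show "p \<in> {id}" using perm_id_on[OF pp] by simp
  next
    fix p :: "nat \<Rightarrow> nat" assume "p \<in> {id}"
    then show "p \<in> {p. p permutes {..<m} \<and> map (dB m n) [0..<m] = map (\<lambda>k. dB m n (p k)) [0..<m]}"
      by (simp add: permutes_id)
  qed
  then show "gB m n (map (dB m n) [0..<m]) = 1" by (simp add: gB_def)
qed

lemma u_exists: "N \<le> (\<Sum>k<m. k) \<Longrightarrow> \<exists>u::nat\<Rightarrow>nat. (\<forall>k. u k \<le> k) \<and> (\<Sum>k<m. u k) = N"
proof (induction m arbitrary: N)
  case 0 then show ?case by (intro exI[of _ "\<lambda>_. 0"]) simp
next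
  case (Suc m)
  show ?case
  proof (cases "N \<le> (\<Sum>k<m. k)")
    case True
    then obtain u where u: "\<forall>k. u k \<le> (k::nat)" "(\<Sum>k<m. u k) = N" using Suc.IH by blast
    define u' where "u' = u(m := 0)"
    have "(\<Sum>k<m. u' k) = (\<Sum>k<m. u k)" by (intro sum.cong) (auto simp: u'_def)
    then have "(\<Sum>k<Suc m. u' k) = N" using u by (simp add: u'_def)
    moreover have "\<forall>k. u' k \<le> k" using u by (simp add: u'_def)
    ultimately show ?thesis by blast
  next
    case False
    define r where "r = N - (\<Sum>k<m. k)"
    have r: "r \<le> m" using Suc.prems False by (simp add: r_def)
    define u' where "u' k = (if k < m then k else if k = m then r else 0)" for k
    have "(\<Sum>k<m. u' k) = (\<Sum>k<m. k)" by (intro sum.cong) (auto simp: u'_def)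
    then have "(\<Sum>k<Suc m. u' k) = N" using False by (simp add: u'_def r_def)
    moreover have "\<forall>k. u' k \<le> k" using r by (simp add: u'_def)
    ultimately show ?thesis by blast
  qed
qed

definition gA :: "nat \<Rightarrow> (nat \<Rightarrow> nat) \<Rightarrow> nat list \<Rightarrow> real" where
  "gA m u x = (\<Sum>p\<in>{p. p permutes {..<m} \<and> (\<forall>l<m. p l = x!l + u l)}. real_of_int (sign p))"

lemma x0A:
  assumes u: "\<forall>k. u k \<le> k" "(\<Sum>k<m. u k) = (m choose 2) - n" and nm: "n \<le> m choose 2"
  shows "map (\<lambda>k. k - u k) [0..<m] \<in> SR_vertices m n \<and> gA m u (map (\<lambda>k. k - u k) [0..<m]) = 1"
proof
  have "sum_list (map (\<lambda>k. k - u k) [0..<m]) = (\<Sum>k<m. k - u k)"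
    by (simp add: sum_list_sum_nth atLeast0LessThan)
  also have "\<dots> = (\<Sum>k<m. k) - (\<Sum>k<m. u k)" using u(1) by (simp add: sum_subtractf_nat)
  also have "\<dots> = n" using u(2) nm by (simp add: gauss_choose)
  finally show "map (\<lambda>k. k - u k) [0..<m] \<in> SR_vertices m n" by (simp add: SR_vertices_def)
next
  have "{p. p permutes {..<m} \<and> (\<forall>l<m. p l = map (\<lambda>k. k - u k) [0..<m] ! l + u l)} = {id}"
  proof (intro equalityI subsetI)
    fix p assume "p \<in> {p. p permutes {..<m} \<and> (\<forall>l<m. p l = map (\<lambda>k. k - u k) [0..<m] ! l + u l)}"
    then have pp: "p permutes {..<m}" and e: "\<forall>l<m. p l = map (\<lambda>k. k - u k) [0..<m] ! l + u l" by auto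
    have "\<forall>k<m. p k = k" using e u(1) by (simp add: le_add_diff_inverse2)
    then show "p \<in> {id}" using perm_id_on[OF pp] by simp
  next
    fix p :: "nat \<Rightarrow> nat" assume "p \<in> {id}"
    then show "p \<in> {p. p permutes {..<m} \<and> (\<forall>l<m. p l = map (\<lambda>k. k - u k) [0..<m] ! l + u l)}"
      using u(1) by (simp add: permutes_id le_add_diff_inverse2)
  qed
  then show "gA m u (map (\<lambda>k. k - u k) [0..<m]) = 1" by (simp add: gA_def)
qed

lemma cliqueA:
  assumes C: "(w,t) \<in> I2 m n"
  shows "(\<Sum>x\<in>{x\<in>SR_vertices m n. mem2 m (w,t) x}. gA m u x) = 0"
proof -
  from C have t1: "1 \<le> t" and lw: "length w = m" and sw: "sum_list w + t = n"
    by (auto simp: I2_def)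
  define F where "F k = w[k := w!k + t]" for k
  have eq: "{x\<in>SR_vertices m n. mem2 m (w,t) x} = F ` {..<m}"
  proof (intro equalityI subsetI)
    fix x assume "x \<in> {x\<in>SR_vertices m n. mem2 m (w,t) x}"
    then obtain k where "k < m" "x = F k" by (auto simp: mem2_def F_def)
    then show "x \<in> F ` {..<m}" by blast
  next
    fix x assume "x \<in> F ` {..<m}"
    then obtain k where k: "k < m" and xk: "x = F k" by auto
    have "sum_list (F k) = sum_list w + (w!k + t) - w!k" using k lw by (simp add: F_def sum_list_update)
    then have "sum_list x = n" using sw xk by simp
    moreover have "length x = m" using xk lw by (simp add: F_def)
    moreover have "mem2 m (w,t) x" using xk k by (auto simp: mem2_def F_def)
    ultimately show "x \<in> {x\<in>SR_vertices m n. mem2 m (w,t) x}" by (simp add: SR_vertices_def)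
  qed
  have inj: "inj_on F {..<m}"
  proof (rule inj_onI)
    fix k k' assume kk: "k \<in> {..<m}" "k' \<in> {..<m}" "F k = F k'"
    show "k = k'"
    proof (rule ccontr)
      assume "k \<noteq> k'"
      then have "F k ! k = w!k + t" "F k' ! k = w!k" using kk(1,2) lw by (auto simp: F_def)
      then show False using kk(3) t1 by simp
    qed
  qed
  define h where "h l = w!l + u l" for l
  define P where "P k = {p. p permutes {..<m} \<and> (\<forall>l<m. p l = h l + (if l = k then t else 0))}" for k
  have gF: "gA m u (F k) = (\<Sum>p\<in>P k. real_of_int (sign p))" if "k < m" for k
  proof -
    have "\<And>p. (\<forall>l<m. p l = F k ! l + u l) \<longleftrightarrow> (\<forall>l<m. p l = h l + (if l = k then t else 0))"
      using that lw by (auto simp: F_def h_def nth_list_update)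
    then show ?thesis unfolding gA_def P_def by simp
  qed
  have finP: "finite (P k)" for k
    by (rule finite_subset[OF _ finite_permutations[of "{..<m}"]]) (auto simp: P_def)
  define S where "S = Sigma {..<m} P"
  have "(\<Sum>x\<in>{x\<in>SR_vertices m n. mem2 m (w,t) x}. gA m u x) = (\<Sum>k<m. gA m u (F k))"
    unfolding eq using inj by (simp add: sum.reindex)
  also have "\<dots> = (\<Sum>k<m. \<Sum>p\<in>P k. real_of_int (sign p))" by (intro sum.cong refl) (simp add: gF)
  also have "\<dots> = (\<Sum>z\<in>S. real_of_int (sign (snd z)))"
    unfolding S_def using finP by (subst sum.Sigma) (auto simp: case_prod_beta)
  finally have sumS: "(\<Sum>x\<in>{x\<in>SR_vertices m n. mem2 m (w,t) x}. gA m u x) = (\<Sum>z\<in>S. real_of_int (sign (snd z)))" .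
  define kk where "kk p k = inv_into UNIV p (p k - t)" for p :: "nat \<Rightarrow> nat" and k
  define \<phi> where "\<phi> z = (case z of (k,p) \<Rightarrow> (kk p k, p \<circ> Transposition.transpose k (kk p k)))" for z
  have key: "\<phi> z \<in> S \<and> \<phi> (\<phi> z) = z \<and> sign (snd (\<phi> z)) = - sign (snd z)" if zS: "z \<in> S" for z
  proof -
    obtain k p where z: "z = (k,p)" by (cases z) auto
    from zS have k: "k < m" and pp: "p permutes {..<m}" and pc: "\<forall>l<m. p l = h l + (if l = k then t else 0)"
      by (auto simp: S_def P_def z)
    define k' where "k' = kk p k"
    have pk: "p k = h k + t" using pc k by simp
    have pkm: "p k < m" using permutes_in_image[OF pp, of k] k by simp
    have "p k - t < m" using pkm by simp
    then have k'm: "k' < m" using permutes_in_image[OF permutes_inv[OF pp], of "p k - t"]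
      by (simp add: k'_def kk_def)
    have pk': "p k' = p k - t" unfolding k'_def kk_def using permutes_inverses(1)[OF pp] by simp
    have kne: "k' \<noteq> k" using pk' pk t1 by auto
    define p' where "p' = p \<circ> Transposition.transpose k k'"
    have pp': "p' permutes {..<m}" unfolding p'_def
      using permutes_swap_id[of k "{..<m}" k'] k k'm pp by (intro permutes_compose) auto
    have hk': "h k' = p k - t" using pc k'm kne pk' by simp
    have pc': "\<forall>l<m. p' l = h l + (if l = k' then t else 0)"
    proof (intro allI impI)
      fix l assume l: "l < m"
      show "p' l = h l + (if l = k' then t else 0)"
      proof (cases "l = k")
        case True then show ?thesis using pk' pk kne by (simp add: p'_def)
      next
        case False
        show ?thesis
        proof (cases "l = k'")
          case True then show ?thesis using pk hk' kne False by (simp add: p'_def)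
        next
          case False2: False
          then show ?thesis using pc l False by (simp add: p'_def)
        qed
      qed
    qed
    have phz: "\<phi> z = (k', p')" by (simp add: \<phi>_def z k'_def p'_def)
    have "(k', p') \<in> S" using k'm pp' pc' by (simp add: S_def P_def)
    moreover have "\<phi> (k', p') = (k, p)"
    proof -
      have p'k: "p' k = p k - t" using pk' by (simp add: p'_def)
      have "kk p' k' = k"
      proof -
        have "p' k' = p k" by (simp add: p'_def)
        then have "kk p' k' = inv_into UNIV p' (p' k)" using p'k by (simp add: kk_def)
        also have "\<dots> = k" using permutes_inverses(2)[OF pp'] by simp
        finally show ?thesis .
      qed
      moreover have "p' \<circ> Transposition.transpose k' k = p"
        by (simp add: p'_def o_assoc[symmetric] transpose_commute[of k' k])
      ultimately show ?thesis by (simp add: \<phi>_def)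
    qed
    moreover have "sign p' = - sign p" unfolding p'_def using sign_comp_transpose[OF pp] kne by simp
    ultimately show ?thesis using phz z by simp
  qed
  have finS: "finite S" unfolding S_def using finP by simp
  have "(\<Sum>z\<in>S. real_of_int (sign (snd z))) = (\<Sum>z\<in>S. - real_of_int (sign (snd z)))"
    by (rule sum.reindex_bij_witness[of _ \<phi> \<phi>]) (use key in auto)
  moreover have "(\<Sum>z\<in>S. - real_of_int (sign (snd z))) = - (\<Sum>z\<in>S. real_of_int (sign (snd z)))"
    by (rule sum_negf)
  ultimately have "(\<Sum>z\<in>S. real_of_int (sign (snd z))) = 0" by linarith
  then show ?thesis using sumS by simp
qed


theorem proposition2:
  fixes m n :: nat
  assumes "SR_vertices m n \<noteq> {}"
  shows "eigenvalue (SR_adj_matrix m n) (max (- real n) (- real (m choose 2)))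
       \<and> (\<forall>k. eigenvalue (SR_adj_matrix m n) k \<longrightarrow> max (- real n) (- real (m choose 2)) \<le> k)"
proof -
  define vs where "vs = SR_enum m n"
  have d: "distinct vs" and sv: "set vs = SR_vertices m n" using SR_enum[of m n] by (auto simp: vs_def)
  have A: "SR_adj_matrix m n = mat (length vs) (length vs) (\<lambda>(i,j). if SR_adj m (vs!i) (vs!j) then 1 else 0)"
    unfolding vs_def by (rule SR_matrix)
  have cnt1: "\<And>x y. x \<in> set vs \<Longrightarrow> y \<in> set vs \<Longrightarrow>
      card {C\<in>I1 m n. mem1 m C x \<and> mem1 m C y} = (if x = y then m choose 2 else if SR_adj m x y then 1 else 0)"
    using count1 sv by auto
  have cnt2: "\<And>x y. x \<in> set vs \<Longrightarrow> y \<in> set vs \<Longrightarrow>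
      card {C\<in>I2 m n. mem2 m C x \<and> mem2 m C y} = (if x = y then n else if SR_adj m x y then 1 else 0)"
    using count2 sv by auto
  have lower: "max (- real n) (- real (m choose 2)) \<le> k" if "eigenvalue (SR_adj_matrix m n) k" for k
  proof -
    have "- real (m choose 2) \<le> k"
      using abstract_bound[OF d I1_fin SR_adj_irr cnt1] that A by simp
    moreover have "- real n \<le> k"
      using abstract_bound[OF d I2_fin SR_adj_irr cnt2] that A by simp
    ultimately show ?thesis by simp
  qed
  have ex: "eigenvalue (SR_adj_matrix m n) (max (- real n) (- real (m choose 2)))"
  proof (cases "n \<le> m choose 2")
    case True
    have "(m choose 2) - n \<le> (\<Sum>k<m. k)" by (simp add: gauss_choose)
    then obtain u where u: "\<forall>k. u k \<le> k" "(\<Sum>k<m. u k) = (m choose 2) - n"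
      using u_exists by blast
    have x0: "map (\<lambda>k. k - u k) [0..<m] \<in> set vs" "gA m u (map (\<lambda>k. k - u k) [0..<m]) \<noteq> 0"
      using x0A[OF u True] sv by auto
    have gz: "\<And>C. C \<in> I2 m n \<Longrightarrow> (\<Sum>x\<in>{x\<in>set vs. mem2 m C x}. gA m u x) = 0"
      using cliqueA sv by auto
    have "eigenvalue (SR_adj_matrix m n) (- real n)"
      using abstract_exists[OF d I2_fin SR_adj_irr cnt2 gz x0] A by simp
    moreover have "max (- real n) (- real (m choose 2)) = - real n" using True by simp
    ultimately show ?thesis by simp
  next
    case False
    have "0 < m \<or> n = 0"
    proof (rule ccontr)
      assume "\<not> (0 < m \<or> n = 0)"
      then have "m = 0" "n \<noteq> 0" by auto
      then have "SR_vertices m n = {}" by (auto simp: SR_vertices_def)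
      with assms show False by simp
    qed
    then have x0: "map (dB m n) [0..<m] \<in> set vs" "gB m n (map (dB m n) [0..<m]) \<noteq> 0"
      using x0B[of m n] False sv by auto
    have gz: "\<And>C. C \<in> I1 m n \<Longrightarrow> (\<Sum>x\<in>{x\<in>set vs. mem1 m C x}. gB m n x) = 0"
      using cliqueB sv by auto
    have "eigenvalue (SR_adj_matrix m n) (- real (m choose 2))"
      using abstract_exists[OF d I1_fin SR_adj_irr cnt1 gz x0] A by simp
    moreover have "max (- real n) (- real (m choose 2)) = - real (m choose 2)" using False by simp
    ultimately show ?thesis by simp
  qed
  show ?thesis using ex lower by blast
qed

end
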